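(* Let $W=\langle w_1,\dots,w_n\rangle$ be a weave. (i) If $|V(W)|\ge 3$ and $W$ is prime, then $W$ is isomorphic to $T_m$ or $U_m$ for some odd $m$. (ii) If $|V(W)|\ge 2$, $v\notin V(W)$ is a vertex such that $v\to w_i$ for all odd $i$ and $w_i\to v$ for all even $i$, and the tournament $W+v$ on $V(W)\cup\{v\}$ is prime, then $W+v$ is isomorphic to $T_m$, $U_m$, or $W_m$ for some odd $m$.
   Context: A tournament is a finite, non-null, loopless directed graph in which for any two distinct vertices $u,v$ there is exactly one edge with both ends in $\{u,v\}$; write $u\to v$ for the edge from $u$ to $v$, and $X\Rightarrow Y$ if $x\to y$ for all $x\in X,y\in Y$. A homogeneous set of $G$ is a set $X\subseteq V(G)$ such that each vertex outside $X$ either has edges to all of $X$ or edges from all of $X$; $G$ is prime if every homogeneous set $X$ has $|X|\le 1$ or $X=V(G)$. A weave $\langle w_1,\dots,w_n\rangle$ is a tournament on $w_1,\dots,w_n$ such that: $w_i\to w_j$ whenever $i<j$ and $i,j$ have opposite parity; either $w_i\to w_j$ for all $i<j$ both odd, or $w_j\to w_i$ for all $i<j$ both odd; and either $w_i\to w_j$ for all $i<j$ both even, or $w_j\to w_i$ for all $i<j$ both even. For $m=2k+1$: $T_m$ is the tournament on $v_1,\dots,v_m$ with $v_i\to v_j$ iff $j\equiv i+1,\dots,i+k\pmod m$; $U_m$ is obtained from $T_m$ by reversing all edges with both ends in $\{v_1,\dots,v_k\}$; $W_m$ is the tournament on $x_1,\dots,x_m$ with $x_i\to x_j$ for $1\le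 i<j\le m-1$ and $\{x_2,x_4,\dots,x_{m-1}\}\Rightarrow x_m\Rightarrow\{x_1,x_3,\dots,x_{m-2}\}$. *)

theory Defs
  imports Main
begin

text \<open>A tournament is given by a vertex set V and an edge relation E,
  where E u v means u \<rightarrow> v. Only the restriction of E to V matters.\<close>

definition tournament :: "'a set \<Rightarrow> ('a \<Rightarrow> 'a \<Rightarrow> bool) \<Rightarrow> bool" where
  "tournament V E \<longleftrightarrow> finite V \<and> V \<noteq> {} \<and> (\<forall>u\<in>V. \<not> E u u) \<and>
     (\<forall>u\<in>V. \<forall>v\<in>V. u \<noteq> v \<longrightarrow> (E u v \<longleftrightarrow> \<not> E v u))"

definition homogeneous :: "'a set \<Rightarrow> ('a \<Rightarrow> 'a \<Rightarrow> bool) \<Rightarrow> 'a set \<Rightarrow> bool" where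
  "homogeneous V E X \<longleftrightarrow> X \<subseteq> V \<and>
     (\<forall>y\<in>V - X. (\<forall>x\<in>X. E y x) \<or> (\<forall>x\<in>X. E x y))"

definition prime_tournament :: "'a set \<Rightarrow> ('a \<Rightarrow> 'a \<Rightarrow> bool) \<Rightarrow> bool" where
  "prime_tournament V E \<longleftrightarrow> tournament V E \<and>
     (\<forall>X. homogeneous V E X \<longrightarrow> card X \<le> 1 \<or> X = V)"

definition tourn_iso :: "'a set \<Rightarrow> ('a \<Rightarrow> 'a \<Rightarrow> bool) \<Rightarrow> 'b set \<Rightarrow> ('b \<Rightarrow> 'b \<Rightarrow> bool) \<Rightarrow> bool" where
  "tourn_iso V E V' E' \<longleftrightarrow> (\<exists>f. bij_betw f V V' \<and> (\<forall>u\<in>V. \<forall>v\<in>V. E u v \<longleftrightarrow> E' (f u) (f v)))"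

definition weave :: "'a set \<Rightarrow> ('a \<Rightarrow> 'a \<Rightarrow> bool) \<Rightarrow> nat \<Rightarrow> (nat \<Rightarrow> 'a) \<Rightarrow> bool" where
  "weave V E n w \<longleftrightarrow> tournament V E \<and> inj_on w {1..n} \<and> w ` {1..n} = V \<and>
     (\<forall>i\<in>{1..n}. \<forall>j\<in>{1..n}. i < j \<and> odd (i + j) \<longrightarrow> E (w i) (w j)) \<and>
     ((\<forall>i\<in>{1..n}. \<forall>j\<in>{1..n}. i < j \<and> odd i \<and> odd j \<longrightarrow> E (w i) (w j)) \<or>
      (\<forall>i\<in>{1..n}. \<forall>j\<in>{1..n}. i < j \<and> odd i \<and> odd j \<longrightarrow> E (w j) (w i))) \<and>
     ((\<forall>i\<in>{1..n}. \<forall>j\<in>{1..n}. i < j \<and> even i \<and> even j \<longrightarrow> E (w i) (w j)) \<or>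
      (\<forall>i\<in>{1..n}. \<forall>j\<in>{1..n}. i < j \<and> even i \<and> even j \<longrightarrow> E (w j) (w i)))"

text \<open>T_m, U_m, W_m on vertex set {1..m} (vertex i stands for v_i resp. x_i), m = 2k+1.\<close>
definition T_edge :: "nat \<Rightarrow> nat \<Rightarrow> nat \<Rightarrow> bool" where
  "T_edge m i j \<longleftrightarrow> (int j - int i) mod int m \<in> {1 .. int ((m - 1) div 2)}"

definition U_edge :: "nat \<Rightarrow> nat \<Rightarrow> nat \<Rightarrow> bool" where
  "U_edge m i j \<longleftrightarrow> (if i \<in> {1..(m - 1) div 2} \<and> j \<in> {1..(m - 1) div 2}
                     then T_edge m j i else T_edge m i j)"

definition W_edge :: "nat \<Rightarrow> nat \<Rightarrow> nat \<Rightarrow> bool" where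
  "W_edge m i j \<longleftrightarrow> (i < j \<and> j \<le> m - 1) \<or> (j = m \<and> i < m \<and> even i) \<or> (i = m \<and> j < m \<and> odd j)"

end

theory Submission
  imports Defs
begin


definition ori :: "('a \<Rightarrow> 'a \<Rightarrow> bool) \<Rightarrow> nat \<Rightarrow> (nat \<Rightarrow> 'a) \<Rightarrow> (nat \<Rightarrow> bool) \<Rightarrow> bool \<Rightarrow> bool" where
  "ori E n w P s \<longleftrightarrow> (\<forall>i\<in>{1..n}. \<forall>j\<in>{1..n}. i < j \<and> P i \<and> P j \<longrightarrow> (if s then E (w i) (w j) else E (w j) (w i)))"

lemma weave_ori:
  assumes "weave V E n w"
  shows "\<exists>so. ori E n w odd so" and "\<exists>se. ori E n w even se"
proof -
  have "ori E n w odd True \<or> ori E n w odd False" using assms unfolding weave_def ori_def by auto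
  then show "\<exists>so. ori E n w odd so" by blast
  have "ori E n w even True \<or> ori E n w even False" using assms unfolding weave_def ori_def by auto
  then show "\<exists>se. ori E n w even se" by blast
qed

definition R :: "bool \<Rightarrow> bool \<Rightarrow> nat \<Rightarrow> nat \<Rightarrow> bool" where
  "R so se i j \<longleftrightarrow> (if odd (i+j) then i < j else if odd i then (so \<longleftrightarrow> i < j) else (se \<longleftrightarrow> i < j))"

lemma weave_R:
  assumes W: "weave V E n w" and so: "ori E n w odd so" and se: "ori E n w even se"
    and i: "i \<in> {1..n}" and j: "j \<in> {1..n}" and ij: "i \<noteq> j"
  shows "E (w i) (w j) \<longleftrightarrow> R so se i j"
proof -
  have T: "tournament V E" and inj: "inj_on w {1..n}" and img: "w ` {1..n} = V"
    using W by (auto simp: weave_def)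
  have anti: "E (w a)(w b) \<longleftrightarrow> \<not> E (w b)(w a)" if "a\<in>{1..n}" "b\<in>{1..n}" "a\<noteq>b" for a b
  proof -
    have "w a \<noteq> w b" using inj that by (meson inj_on_eq_iff)
    moreover have "w a \<in> V" "w b \<in> V" using img that by auto
    ultimately show ?thesis using T unfolding tournament_def by blast
  qed
  have lt: "E (w a) (w b) \<longleftrightarrow> R so se a b" if a: "a\<in>{1..n}" "b\<in>{1..n}" "a<b" for a b
  proof (cases "odd (a+b)")
    case True
    then show ?thesis using W a unfolding weave_def R_def by auto
  next
    case False
    show ?thesis
    proof (cases "odd a")
      case True
      then have "odd b" using False by auto
      then show ?thesis using so a True False anti[of a b] unfolding ori_def R_def by (cases so) auto
    next
      case c2: False
      then have "even b" using False by auto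
      then show ?thesis using se a c2 False anti[of a b] unfolding ori_def R_def by (cases se) auto
    qed
  qed
  show ?thesis
  proof (cases "i < j")
    case True then show ?thesis using lt i j by blast
  next
    case False
    then have "j < i" using ij by simp
    then have "E (w j)(w i) \<longleftrightarrow> R so se j i" using lt i j by blast
    moreover have "R so se j i \<longleftrightarrow> \<not> R so se i j" using ij \<open>j < i\<close> by (auto simp: R_def add.commute)
    ultimately show ?thesis using anti[OF i j ij] by blast
  qed
qed

lemma iso_from_index:
  assumes inj: "inj_on u {1..N}" and img: "u ` {1..N} = V" and h: "bij_betw h {1..N} {1..m}"
    and e: "\<And>i j. i \<in> {1..N} \<Longrightarrow> j \<in> {1..N} \<Longrightarrow> E (u i) (u j) \<longleftrightarrow> F (h i) (h j)"
  shows "tourn_iso V E {1..m} F"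
proof -
  let ?g = "the_inv_into {1..N} u"
  have bu: "bij_betw u {1..N} V" using inj img by (simp add: bij_betw_def)
  have bg: "bij_betw ?g V {1..N}" using bij_betw_the_inv_into[OF bu] .
  have "bij_betw (h \<circ> ?g) V {1..m}" using bij_betw_trans[OF bg h] .
  moreover have "\<forall>x\<in>V. \<forall>y\<in>V. E x y \<longleftrightarrow> F ((h \<circ> ?g) x) ((h \<circ> ?g) y)"
  proof (intro ballI)
    fix x y assume x: "x \<in> V" and y: "y \<in> V"
    have gx: "?g x \<in> {1..N}" "u (?g x) = x" using x img inj
      by (auto simp: the_inv_into_f_f)
    have gy: "?g y \<in> {1..N}" "u (?g y) = y" using y img inj
      by (auto simp: the_inv_into_f_f)
    show "E x y \<longleftrightarrow> F ((h \<circ> ?g) x) ((h \<circ> ?g) y)" using e[OF gx(1) gy(1)] gx gy by simp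
  qed
  ultimately show ?thesis unfolding tourn_iso_def by blast
qed

lemma mod_expl:
  fixes a r q m :: int
  assumes "a = r + q*m" "0 \<le> r" "r < m" shows "a mod m = r"
  using assms by simp

lemma key_mod:
  fixes k d :: int
  assumes k: "k \<ge> 0" and d0: "d \<noteq> 0" and dl: "\<bar>d\<bar> < 2*k+1"
  shows "((d*k) mod (2*k+1) \<in> {1..k} \<longleftrightarrow> (d > 0 \<and> odd d) \<or> (d < 0 \<and> even d))
         \<and> (d*k) mod (2*k+1) \<noteq> 0"
proof (cases "d > 0")
  case pos: True
  show ?thesis
  proof (cases "odd d")
    case True
    then obtain t where t: "d = 2*t+1" by (meson oddE)
    have "t \<ge> 0" "t \<le> k-1" using pos dl t by auto
    have "(d*k) mod (2*k+1) = k - t"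
      using \<open>t \<le> k-1\<close> \<open>t\<ge>0\<close> by (intro mod_expl[where q=t]) (simp_all only: t, simp_all add: algebra_simps)
    then show ?thesis using True pos \<open>t \<le> k-1\<close> \<open>t\<ge>0\<close> by auto
  next
    case False
    then obtain t where t: "d = 2*t" by (meson evenE)
    have "t \<ge> 1" "t \<le> k" using pos dl t by auto
    have "(d*k) mod (2*k+1) = 2*k+1-t"
      using \<open>t \<le> k\<close> \<open>t\<ge>1\<close> by (intro mod_expl[where q="t-1"]) (simp_all only: t, simp_all add: algebra_simps)
    then show ?thesis using False pos \<open>t \<le> k\<close> \<open>t\<ge>1\<close> by auto
  qed
next
  case neg: False
  then have neg': "d < 0" using d0 by simp
  show ?thesis
  proof (cases "odd d")
    case True
    then have "odd (-d)" by simp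
    then obtain t where "-d = 2*t+1" by (meson oddE)
    then have t: "d = -(2*t+1)" by simp
    have "t \<ge> 0" "t \<le> k-1" using neg' dl t by auto
    have "(d*k) mod (2*k+1) = k+1+t"
      using \<open>t \<le> k-1\<close> \<open>t\<ge>0\<close> by (intro mod_expl[where q="-t-1"]) (simp_all only: t, simp_all add: algebra_simps)
    then show ?thesis using True neg' \<open>t \<le> k-1\<close> \<open>t\<ge>0\<close> by auto
  next
    case False
    then have "even (-d)" by simp
    then obtain t where "-d = 2*t" by (meson evenE)
    then have t: "d = -(2*t)" by simp
    have "t \<ge> 1" "t \<le> k" using neg' dl t by auto
    have "(d*k) mod (2*k+1) = t"
      using \<open>t \<le> k\<close> \<open>t\<ge>1\<close> by (intro mod_expl[where q="-t"]) (simp_all only: t, simp_all add: algebra_simps)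
    then show ?thesis using False neg' \<open>t \<le> k\<close> \<open>t\<ge>1\<close> by auto
  qed
qed

definition hmap :: "nat \<Rightarrow> int \<Rightarrow> nat \<Rightarrow> nat" where
  "hmap k c i = nat (((int i + c) * int k) mod (2 * int k + 1)) + 1"

lemma hmap_int: "int (hmap k c i) = ((int i + c) * int k) mod (2 * int k + 1) + 1"
  by (simp add: hmap_def)

lemma hmap_range: "hmap k c i \<in> {1..2*k+1}"
proof -
  have "((int i + c) * int k) mod (2 * int k + 1) < 2 * int k + 1" by (rule pos_mod_bound) simp
  then have "int (hmap k c i) \<le> int (2*k+1)" using hmap_int[of k c i] by linarith
  then have "hmap k c i \<le> 2*k+1" by (simp only: of_nat_le_iff)
  moreover have "hmap k c i \<ge> 1" by (simp add: hmap_def)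
  ultimately show ?thesis by simp
qed

lemma hmap_diff:
  "(int (hmap k c j) - int (hmap k c i)) mod (2*int k+1) = ((int j - int i) * int k) mod (2*int k+1)"
proof -
  have "(int (hmap k c j) - int (hmap k c i)) mod (2*int k+1)
      = (((int j + c) * int k) mod (2 * int k + 1) - ((int i + c) * int k) mod (2 * int k + 1)) mod (2*int k+1)"
    unfolding hmap_int by simp
  also have "\<dots> = ((int j + c) * int k - (int i + c) * int k) mod (2*int k+1)"
    by (rule mod_diff_eq)
  also have "(int j + c) * int k - (int i + c) * int k = (int j - int i) * int k"
    by (simp add: algebra_simps)
  finally show ?thesis .
qed

lemma par_conv: "odd (int j - int i) \<longleftrightarrow> odd (i + j)"
  by presburger

lemma hmap_T:
  assumes i: "i \<in> {1..2*k+1}" and j: "j \<in> {1..2*k+1}"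
  shows "T_edge (2*k+1) (hmap k c i) (hmap k c j) \<longleftrightarrow> i \<noteq> j \<and> ((i < j \<and> odd (i+j)) \<or> (j < i \<and> even (i+j)))"
proof -
  have "T_edge (2*k+1) (hmap k c i) (hmap k c j) \<longleftrightarrow> ((int j - int i) * int k) mod (2*int k+1) \<in> {1..int k}"
  proof -
    have e1: "int (2*k+1) = 2*int k+1" and e2: "(2*k+1-1) div 2 = k" by simp_all
    show ?thesis unfolding T_edge_def e1 e2 hmap_diff ..
  qed
  also have "\<dots> \<longleftrightarrow> i \<noteq> j \<and> ((i < j \<and> odd (i+j)) \<or> (j < i \<and> even (i+j)))"
  proof (cases "i = j")
    case True then show ?thesis by simp
  next
    case False
    have "\<bar>int j - int i\<bar> < 2 * int k + 1" using i j by auto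
    from key_mod[OF _ _ this] False
    have "((int j - int i) * int k) mod (2*int k+1) \<in> {1..int k} \<longleftrightarrow>
        (int j - int i > 0 \<and> odd (int j - int i)) \<or> (int j - int i < 0 \<and> even (int j - int i))" by simp
    then show ?thesis using False par_conv[of j i] by auto
  qed
  finally show ?thesis .
qed

lemma hmap_bij: "bij_betw (hmap k c) {1..2*k+1} {1..2*k+1}"
proof -
  have inj: "inj_on (hmap k c) {1..2*k+1}"
  proof (rule inj_onI, rule ccontr)
    fix i j assume i: "i \<in> {1..2*k+1}" and j: "j \<in> {1..2*k+1}" and e: "hmap k c i = hmap k c j" and ne: "i \<noteq> j"
    have "\<bar>int j - int i\<bar> < 2 * int k + 1" using i j by auto
    from key_mod[OF _ _ this] ne have "((int j - int i) * int k) mod (2*int k+1) \<noteq> 0" by simp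
    moreover have "((int j - int i) * int k) mod (2*int k+1) = 0" using hmap_diff[of k c j i] e by simp
    ultimately show False by simp
  qed
  moreover have "hmap k c ` {1..2*k+1} = {1..2*k+1}"
    by (rule endo_inj_surj) (use inj hmap_range in auto)
  ultimately show ?thesis by (simp add: bij_betw_def)
qed

lemma hmap_U_low:
  assumes i: "i \<in> {1..2*k+1}"
  shows "hmap k 1 i \<le> k \<longleftrightarrow> even i"
proof (cases "even i")
  case True
  then obtain s where s: "i = 2*s" by (meson evenE)
  have "s \<ge> 1" "s \<le> k" using i s by auto
  have "((int i + 1) * int k) mod (2 * int k + 1) = int k - int s"
    using \<open>s \<le> k\<close> \<open>s\<ge>1\<close> by (intro mod_expl[where q="int s"]) (simp_all add: s algebra_simps)
  then have "int (hmap k 1 i) = int k - int s + 1" by (simp add: hmap_int)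
  then show ?thesis using True \<open>s\<ge>1\<close> by simp
next
  case False
  then obtain s where s: "i = 2*s+1" by (meson oddE)
  have "s \<le> k" using i s by auto
  show ?thesis
  proof (cases "s < k")
    case True
    have "((int i + 1) * int k) mod (2 * int k + 1) = 2 * int k - int s"
      using True by (intro mod_expl[where q="int s"]) (simp_all add: s algebra_simps)
    then have "int (hmap k 1 i) = 2 * int k - int s + 1" by (simp add: hmap_int)
    then show ?thesis using False True by simp
  next
    case c2: False
    then have "s = k" using \<open>s \<le> k\<close> by simp
    have "((int i + 1) * int k) mod (2 * int k + 1) = int k"
      by (intro mod_expl[where q="int k"]) (simp_all add: s \<open>s = k\<close> algebra_simps)
    then have "int (hmap k 1 i) = int k + 1" by (simp add: hmap_int)
    then show ?thesis using False by simp
  qed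
qed

lemma hmap_U:
  assumes i: "i \<in> {1..2*k+1}" and j: "j \<in> {1..2*k+1}"
  shows "U_edge (2*k+1) (hmap k 1 i) (hmap k 1 j) \<longleftrightarrow> i \<noteq> j \<and>
     ((odd (i+j) \<and> i < j) \<or> (odd i \<and> odd j \<and> j < i) \<or> (even i \<and> even j \<and> i < j))"
proof -
  have c: "(hmap k 1 i \<in> {1..(2*k+1 - 1) div 2} \<and> hmap k 1 j \<in> {1..(2*k+1 - 1) div 2}) \<longleftrightarrow> even i \<and> even j"
    using hmap_U_low[OF i] hmap_U_low[OF j] hmap_range[of k 1 i] hmap_range[of k 1 j] by auto
  show ?thesis
    unfolding U_edge_def c using hmap_T[OF i j, of 1] hmap_T[OF j i, of 1] by (auto simp: add.commute)
qed

lemma card_weave: "weave V E n w \<Longrightarrow> card V = n"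
  unfolding weave_def by (metis card_atLeastAtMost card_image diff_Suc_1)

lemma prime_no_hom: "prime_tournament V E \<Longrightarrow> homogeneous V E X \<Longrightarrow> card X \<ge> 2 \<Longrightarrow> X \<noteq> V \<Longrightarrow> False"
  unfolding prime_tournament_def by force


lemma R_T: "i \<noteq> j \<Longrightarrow> R False False i j \<longleftrightarrow> ((i<j \<and> odd(i+j)) \<or> (j<i \<and> even(i+j)))"
  by (auto simp: R_def)
lemma R_U: "i \<noteq> j \<Longrightarrow> R False True i j \<longleftrightarrow> ((odd (i+j) \<and> i < j) \<or> (odd i \<and> odd j \<and> j < i) \<or> (even i \<and> even j \<and> i < j))"
  by (auto simp: R_def)
lemma R_src: "1 < j \<Longrightarrow> R True se 1 j"
  by (auto simp: R_def)
lemma R_sink: "i < n \<Longrightarrow> even n \<Longrightarrow> R so True i n"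
  by (auto simp: R_def)
lemma R_o1: "odd i \<Longrightarrow> 1 < i \<Longrightarrow> R False se i 1"
  by (auto simp: R_def)
lemma R_on: "odd i \<Longrightarrow> i < n \<Longrightarrow> even n \<Longrightarrow> R so se i n"
  by (auto simp: R_def)
lemma R_e1: "even i \<Longrightarrow> 1 < i \<Longrightarrow> R so se 1 i"
  by (auto simp: R_def)
lemma R_en: "even i \<Longrightarrow> i < n \<Longrightarrow> even n \<Longrightarrow> R so False n i"
  by (auto simp: R_def)
lemma main_i:
  assumes W: "weave V E n w" and c3: "card V \<ge> 3" and P: "prime_tournament V E"
  shows "\<exists>m. odd m \<and> (tourn_iso V E {1..m} (T_edge m) \<or> tourn_iso V E {1..m} (U_edge m))"
proof -
  have n: "card V = n" using W by (rule card_weave)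
  have inj: "inj_on w {1..n}" and img: "w ` {1..n} = V" and T: "tournament V E"
    using W by (auto simp: weave_def)
  have fin: "finite V" using T by (simp add: tournament_def)
  obtain so where so: "ori E n w odd so" using weave_ori(1)[OF W] by blast
  obtain se where se: "ori E n w even se" using weave_ori(2)[OF W] by blast
  have ER: "E (w i) (w j) \<longleftrightarrow> R so se i j" if "i\<in>{1..n}" "j\<in>{1..n}" "i\<noteq>j" for i j
    using weave_R[OF W so se that] .
  have wV: "w i \<in> V" if "i \<in> {1..n}" for i using img that by auto
  have winv: "\<exists>i\<in>{1..n}. x = w i" if "x \<in> V" for x using img that by auto
  have weq: "w i = w j \<longleftrightarrow> i = j" if "i \<in> {1..n}" "j \<in> {1..n}" for i j
    using inj that by (meson inj_on_eq_iff)
  have Eirr: "\<not> E x x" if "x \<in> V" for x using T that by (auto simp: tournament_def)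
  have n3: "n \<ge> 3" using n c3 by simp
  have one: "1 \<in> {1..n}" and nn: "n \<in> {1..n}" using n3 by auto
  show ?thesis
  proof (cases so)
    case True
    let ?X = "V - {w 1}"
    have "homogeneous V E ?X"
      unfolding homogeneous_def
    proof (intro conjI ballI)
      show "?X \<subseteq> V" by auto
    next
      fix y assume "y \<in> V - ?X"
      then have y: "y = w 1" by auto
      show "(\<forall>x\<in>?X. E y x) \<or> (\<forall>x\<in>?X. E x y)"
      proof (rule disjI1, intro ballI)
        fix x assume "x \<in> ?X"
        then have "x \<in> V" "x \<noteq> w 1" by auto
        then obtain j where j: "j \<in> {1..n}" "x = w j" using winv by blast
        with \<open>x \<noteq> w 1\<close> have "1 < j" by (cases "j = 1") auto
        have "R so se 1 j" using True R_src[OF \<open>1<j\<close>] by simp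
        then show "E y x" using ER[OF one j(1)] y j(2) \<open>1<j\<close> by simp
      qed
    qed
    moreover have "card ?X \<ge> 2" using n3 n wV[OF one] fin by (simp add: card_Diff_singleton)
    moreover have "?X \<noteq> V" using wV[OF one] by auto
    ultimately show ?thesis using prime_no_hom[OF P] by blast
  next
    case sf: False
    show ?thesis
    proof (cases "even n")
      case ev: True
      show ?thesis
      proof (cases se)
        case True
        let ?X = "V - {w n}"
        have "homogeneous V E ?X"
          unfolding homogeneous_def
        proof (intro conjI ballI)
          show "?X \<subseteq> V" by auto
        next
          fix y assume "y \<in> V - ?X"
          then have y: "y = w n" by auto
          show "(\<forall>x\<in>?X. E y x) \<or> (\<forall>x\<in>?X. E x y)"
          proof (rule disjI2, intro ballI)
            fix x assume "x \<in> ?X"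
            then have "x \<in> V" "x \<noteq> w n" by auto
            then obtain j where j: "j \<in> {1..n}" "x = w j" using winv by blast
            with \<open>x \<noteq> w n\<close> have "j < n" by (cases "j = n") auto
            have "R so se j n" using True R_sink[OF \<open>j<n\<close> ev] by simp
            then show "E x y" using ER[OF j(1) nn] y j(2) \<open>j<n\<close> by simp
          qed
        qed
        moreover have "card ?X \<ge> 2" using n3 n wV[OF nn] fin by (simp add: card_Diff_singleton)
        moreover have "?X \<noteq> V" using wV[OF nn] by auto
        ultimately show ?thesis using prime_no_hom[OF P] by blast
      next
        case sef: False
        let ?X = "{w 1, w n}"
        have "homogeneous V E ?X"
          unfolding homogeneous_def
        proof (intro conjI ballI)
          show "?X \<subseteq> V" using wV[OF one] wV[OF nn] by auto
        next
          fix y assume "y \<in> V - ?X"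
          then have "y \<in> V" "y \<noteq> w 1" "y \<noteq> w n" by auto
          then obtain i where i0: "i \<in> {1..n}" "y = w i" using winv by blast
          with \<open>y \<noteq> w 1\<close> \<open>y \<noteq> w n\<close> have i: "i \<in> {1..n}" "y = w i" "i \<noteq> 1" "i \<noteq> n" by auto
          show "(\<forall>x\<in>?X. E y x) \<or> (\<forall>x\<in>?X. E x y)"
          proof (cases "odd i")
            case True
            have "1 < i" "i < n" using i by auto
            have "R so se i 1" "R so se i n" using sf R_o1[OF True \<open>1<i\<close>] R_on[OF True \<open>i<n\<close> ev] by simp_all
            then have "E y (w 1)" "E y (w n)" using ER[OF i(1) one] ER[OF i(1) nn] i by simp_all
            then show ?thesis by blast
          next
            case False
            have "1 < i" "i < n" using i by auto
            have "R so se 1 i" "R so se n i" using sef R_e1[OF _ \<open>1<i\<close>] R_en[OF _ \<open>i<n\<close> ev] False by simp_all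
            then have "E (w 1) y" "E (w n) y" using ER[OF one i(1)] ER[OF nn i(1)] i by simp_all
            then show ?thesis by blast
          qed
        qed
        moreover have "card ?X \<ge> 2" using n3 weq[OF one nn] by simp
        moreover have "card ?X \<le> 2" by (rule card_insert_le_m1) simp_all
        moreover have "?X \<noteq> V" using n3 n \<open>card ?X \<le> 2\<close> by auto
        ultimately show ?thesis using prime_no_hom[OF P] by blast
      qed
    next
      case od: False
      then obtain k where k: "n = 2*k+1" by (meson oddE)
      show ?thesis
      proof (cases se)
        case False
        have "tourn_iso V E {1..2*k+1} (T_edge (2*k+1))"
        proof (rule iso_from_index[OF inj[unfolded k] img[unfolded k] hmap_bij[of k "-1"]])
          fix i j assume i: "i \<in> {1..2*k+1}" and j: "j \<in> {1..2*k+1}"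
          show "E (w i) (w j) \<longleftrightarrow> T_edge (2*k+1) (hmap k (-1) i) (hmap k (-1) j)"
          proof (cases "i = j")
            case True
            have "i \<in> {1..n}" using i k by simp
            then have "\<not> E (w i) (w i)" using Eirr wV by blast
            moreover have "\<not> T_edge (2*k+1) (hmap k (-1) i) (hmap k (-1) i)" using hmap_T[OF i i, of "-1"] by blast
            ultimately show ?thesis using True by simp
          next
            case ne: False
            have "E (w i) (w j) \<longleftrightarrow> R False False i j" using ER[of i j] i j k sf False ne by simp
            then show ?thesis using hmap_T[OF i j, of "-1"] R_T[OF ne] ne by blast
          qed
        qed
        then show ?thesis by (intro exI[of _ "2*k+1"] conjI disjI1) simp_all
      next
        case True
        have "tourn_iso V E {1..2*k+1} (U_edge (2*k+1))"
        proof (rule iso_from_index[OF inj[unfolded k] img[unfolded k] hmap_bij[of k 1]])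
          fix i j assume i: "i \<in> {1..2*k+1}" and j: "j \<in> {1..2*k+1}"
          show "E (w i) (w j) \<longleftrightarrow> U_edge (2*k+1) (hmap k 1 i) (hmap k 1 j)"
          proof (cases "i = j")
            case True
            have "i \<in> {1..n}" using i k by simp
            then have "\<not> E (w i) (w i)" using Eirr wV by blast
            moreover have "\<not> U_edge (2*k+1) (hmap k 1 i) (hmap k 1 i)" using hmap_U[OF i i] by blast
            ultimately show ?thesis using True by simp
          next
            case ne: False
            have "E (w i) (w j) \<longleftrightarrow> R False True i j" using ER[of i j] i j k sf True ne by simp
            then show ?thesis using hmap_U[OF i j] R_U[OF ne] ne by blast
          qed
        qed
        then show ?thesis by (intro exI[of _ "2*k+1"] conjI disjI2) simp_all
      qed
    qed
  qed
qed



lemma weave_intro: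
  assumes "tournament V E" "inj_on w {1..n}" "w ` {1..n} = V"
    "\<forall>i\<in>{1..n}. \<forall>j\<in>{1..n}. i < j \<and> odd (i+j) \<longrightarrow> E (w i) (w j)"
    "ori E n w odd so" "ori E n w even se"
  shows "weave V E n w"
  using assms unfolding weave_def ori_def by (cases so; cases se) auto

lemma R_TT: "i \<noteq> j \<Longrightarrow> R True True i j \<longleftrightarrow> i < j"
  by (auto simp: R_def)

lemma main_ii:
  assumes W: "weave V E n w" and c2: "card V \<ge> 2" and vV: "v \<notin> V"
    and vo: "\<forall>i\<in>{1..n}. odd i \<longrightarrow> E v (w i)" and ve: "\<forall>i\<in>{1..n}. even i \<longrightarrow> E (w i) v"
    and P: "prime_tournament (insert v V) E"
  shows "\<exists>m. odd m \<and> (tourn_iso (insert v V) E {1..m} (T_edge m)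
                          \<or> tourn_iso (insert v V) E {1..m} (U_edge m)
                          \<or> tourn_iso (insert v V) E {1..m} (W_edge m))"
proof -
  have n: "card V = n" using W by (rule card_weave)
  have inj: "inj_on w {1..n}" and img: "w ` {1..n} = V"
    using W by (auto simp: weave_def)
  have T: "tournament (insert v V) E" using P by (simp add: prime_tournament_def)
  have fin: "finite V" using T by (simp add: tournament_def)
  obtain so where so: "ori E n w odd so" using weave_ori(1)[OF W] by blast
  obtain se where se: "ori E n w even se" using weave_ori(2)[OF W] by blast
  have ER: "E (w i) (w j) \<longleftrightarrow> R so se i j" if "i\<in>{1..n}" "j\<in>{1..n}" "i\<noteq>j" for i j
    using weave_R[OF W so se that] .
  have wV: "w i \<in> V" if "i \<in> {1..n}" for i using img that by auto
  have winv: "\<exists>i\<in>{1..n}. x = w i" if "x \<in> V" for x using img that by auto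
  have weq: "w i = w j \<longleftrightarrow> i = j" if "i \<in> {1..n}" "j \<in> {1..n}" for i j
    using inj that by (meson inj_on_eq_iff)
  have anti: "E x y \<longleftrightarrow> \<not> E y x" if "x \<in> insert v V" "y \<in> insert v V" "x \<noteq> y" for x y
    using T that unfolding tournament_def by blast
  have Eirr: "\<not> E x x" if "x \<in> insert v V" for x using T that by (auto simp: tournament_def)
  have n2: "n \<ge> 2" using n c2 by simp
  have nn: "n \<in> {1..n}" using n2 by auto
  have cI: "card (insert v V) = n + 1" using n vV fin by simp
  have vw: "v \<noteq> w i" if "i \<in> {1..n}" for i using vV wV[OF that] by auto
  have Ewv: "E (w i) v \<longleftrightarrow> even i" if "i \<in> {1..n}" for i
  proof (cases "even i")
    case True then show ?thesis using ve that by simp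
  next
    case False
    then have "E v (w i)" using vo that by simp
    then show ?thesis using anti[of v "w i"] wV[OF that] vw[OF that] False by auto
  qed
  have Evw: "E v (w j) \<longleftrightarrow> odd j" if "j \<in> {1..n}" for j
    using Ewv[OF that] anti[of v "w j"] wV[OF that] vw[OF that] by auto
  show ?thesis
  proof (cases "odd n")
    case od: True
    show ?thesis
    proof (cases so)
      case True
      let ?X = "insert v V - {w n}"
      have "homogeneous (insert v V) E ?X"
        unfolding homogeneous_def
      proof (intro conjI ballI)
        show "?X \<subseteq> insert v V" by auto
      next
        fix y assume "y \<in> insert v V - ?X"
        then have y: "y = w n" by auto
        show "(\<forall>x\<in>?X. E y x) \<or> (\<forall>x\<in>?X. E x y)"
        proof (rule disjI2, intro ballI)
          fix x assume x: "x \<in> ?X"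
          show "E x y"
          proof (cases "x = v")
            case True then show ?thesis using Evw[OF nn] od y by simp
          next
            case False
            then have "x \<in> V" "x \<noteq> w n" using x by auto
            then obtain j where j: "j \<in> {1..n}" "x = w j" using winv by blast
            with \<open>x \<noteq> w n\<close> have "j < n" by (cases "j = n") auto
            have "R so se j n" using True \<open>j < n\<close> od by (auto simp: R_def)
            then show "E x y" using ER[OF j(1) nn] y j(2) \<open>j<n\<close> by simp
          qed
        qed
      qed
      moreover have "card ?X \<ge> 2" using n2 cI wV[OF nn] fin by (simp add: card_Diff_singleton)
      moreover have "?X \<noteq> insert v V" using wV[OF nn] by auto
      ultimately show ?thesis using prime_no_hom[OF P] by blast
    next
      case sf: False
      let ?X = "{w n, v}"
      have "homogeneous (insert v V) E ?X"
        unfolding homogeneous_def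
      proof (intro conjI ballI)
        show "?X \<subseteq> insert v V" using wV[OF nn] by auto
      next
        fix y assume "y \<in> insert v V - ?X"
        then have "y \<in> V" "y \<noteq> w n" by auto
        then obtain i where i0: "i \<in> {1..n}" "y = w i" using winv by blast
        have "i \<noteq> n" using i0 \<open>y \<noteq> w n\<close> by auto
        then have i: "i \<in> {1..n}" "y = w i" "i < n" using i0 by auto
        show "(\<forall>x\<in>?X. E y x) \<or> (\<forall>x\<in>?X. E x y)"
        proof (cases "odd i")
          case True
          have "R so se n i" using sf True od i(3) by (auto simp: R_def)
          then have "E (w n) y" "E v y" using ER[OF nn i(1)] i Evw[OF i(1)] True by simp_all
          then show ?thesis by blast
        next
          case False
          have "R so se i n" using False od i(3) by (auto simp: R_def)
          then have "E y (w n)" "E y v" using ER[OF i(1) nn] i Ewv[OF i(1)] False by simp_all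
          then show ?thesis by blast
        qed
      qed
      moreover have "card ?X \<ge> 2" using vw[OF nn] by simp
      moreover have "card ?X \<le> 2" by (rule card_insert_le_m1) simp_all
      moreover have "?X \<noteq> insert v V" using n2 cI \<open>card ?X \<le> 2\<close> by auto
      ultimately show ?thesis using prime_no_hom[OF P] by blast
    qed
  next
    case ev: False
    define u where "u = w(n+1 := v)"
    have uw: "u i = w i" if "i \<in> {1..n}" for i using that by (auto simp: u_def)
    have un: "u (n+1) = v" by (simp add: u_def)
    have split: "{1..n+1} = insert (n+1) {1..n}" by auto
    have uimgw: "u ` {1..n} = V" unfolding img[symmetric] by (rule image_cong) (simp_all add: uw)
    have uimg: "u ` {1..n+1} = insert v V" unfolding split using uimgw un by simp
    have uinj: "inj_on u {1..n+1}" unfolding split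
    proof (subst inj_on_insert, intro conjI)
      show "inj_on u {1..n}" using inj inj_on_cong[of "{1..n}" u w] uw by blast
      show "u (n+1) \<notin> u ` ({1..n} - {n+1})" using un uimgw vV by auto
    qed
    have Eu: "E (u i) (u j) \<longleftrightarrow> (if j = n+1 then even i else if i = n+1 then odd j else R so se i j)"
      if i: "i \<in> {1..n+1}" and j: "j \<in> {1..n+1}" and ij: "i \<noteq> j" for i j
    proof (cases "j = n+1")
      case True
      then have "i \<in> {1..n}" using i ij by auto
      then show ?thesis using True Ewv uw un by simp
    next
      case False
      then have j': "j \<in> {1..n}" using j by auto
      show ?thesis
      proof (cases "i = n+1")
        case True
        then show ?thesis using False Evw[OF j'] uw[OF j'] un by simp
      next
        case c2: False
        then have "i \<in> {1..n}" using i by auto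
        then show ?thesis using False c2 ER[OF _ j' ij] uw j' by simp
      qed
    qed
    show ?thesis
    proof (cases so)
      case sf: False
      have "weave (insert v V) E (n+1) u"
      proof (rule weave_intro[OF T uinj uimg])
        show "\<forall>i\<in>{1..n+1}. \<forall>j\<in>{1..n+1}. i < j \<and> odd (i+j) \<longrightarrow> E (u i) (u j)"
        proof (intro ballI impI)
          fix i j assume i: "i \<in> {1..n+1}" and j: "j \<in> {1..n+1}" and c: "i < j \<and> odd (i+j)"
          show "E (u i) (u j)"
          proof (cases "j = n+1")
            case True then show ?thesis using Eu[OF i j] c ev by auto
          next
            case False then show ?thesis using Eu[OF i j] c i j by (auto simp: R_def)
          qed
        qed
        show "ori E (n+1) u odd False" unfolding ori_def
        proof (intro ballI impI)
          fix i j assume i: "i \<in> {1..n+1}" and j: "j \<in> {1..n+1}" and c: "i < j \<and> odd i \<and> odd j"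
          have "E (u j) (u i) \<longleftrightarrow> (if i = n+1 then even j else if j = n+1 then odd i else R so se j i)"
            using Eu[OF j i] c by simp
          then show "if False then E (u i) (u j) else E (u j) (u i)" using c j sf by (auto simp: R_def)
        qed
        show "ori E (n+1) u even se" unfolding ori_def
        proof (intro ballI impI)
          fix i j assume i: "i \<in> {1..n+1}" and j: "j \<in> {1..n+1}" and c: "i < j \<and> even i \<and> even j"
          then have "j \<noteq> n+1" using ev by auto
          have "E (u i) (u j) \<longleftrightarrow> R so se i j" using Eu[OF i j] c i j \<open>j \<noteq> n+1\<close> by simp
          moreover have "E (u j) (u i) \<longleftrightarrow> R so se j i" using Eu[OF j i] c i j \<open>j \<noteq> n+1\<close> by simp
          ultimately show "if se then E (u i) (u j) else E (u j) (u i)" using c by (auto simp: R_def)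
        qed
      qed
      from main_i[OF this _ P] cI n2 show ?thesis by auto
    next
      case st: True
      show ?thesis
      proof (cases se)
        case sef: False
        define u' where "u' = (\<lambda>i. if i = 1 then v else w (i-1))"
        have u'img: "u' ` {1..n+1} = insert v V"
        proof
          show "u' ` {1..n+1} \<subseteq> insert v V"
          proof (rule image_subsetI)
            fix x assume x: "x \<in> {1..n+1}"
            show "u' x \<in> insert v V"
            proof (cases "x = 1")
              case True then show ?thesis by (simp add: u'_def)
            next
              case False
              then have "x - 1 \<in> {1..n}" using x by auto
              then show ?thesis using wV False by (simp add: u'_def)
            qed
          qed
          show "insert v V \<subseteq> u' ` {1..n+1}"
          proof
            fix x assume "x \<in> insert v V"
            then show "x \<in> u' ` {1..n+1}"
            proof
              assume "x = v" then show ?thesis by (auto simp: u'_def image_def intro!: bexI[of _ 1])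
            next
              assume "x \<in> V"
              then obtain i where i: "i \<in> {1..n}" "x = w i" using winv by blast
              then have "u' (i+1) = x" by (simp add: u'_def)
              moreover have "i+1 \<in> {1..n+1}" using i by auto
              ultimately show ?thesis by blast
            qed
          qed
        qed
        have u'inj: "inj_on u' {1..n+1}"
        proof (rule inj_onI)
          fix i j assume i: "i \<in> {1..n+1}" and j: "j \<in> {1..n+1}" and e: "u' i = u' j"
          show "i = j"
          proof (cases "i = 1"; cases "j = 1")
            assume a: "i = 1" "j \<noteq> 1"
            then have "j - 1 \<in> {1..n}" using j by auto
            then show ?thesis using e vw[of "j-1"] a by (simp add: u'_def)
          next
            assume a: "i \<noteq> 1" "j = 1"
            then have "i - 1 \<in> {1..n}" using i by auto
            then show ?thesis using e vw[of "i-1"] a by (simp add: u'_def)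
          next
            assume "i \<noteq> 1" "j \<noteq> 1"
            then have "w (i-1) = w (j-1)" "i-1 \<in> {1..n}" "j-1 \<in> {1..n}" using e i j by (auto simp: u'_def)
            then show ?thesis using weq \<open>i \<noteq> 1\<close> \<open>j \<noteq> 1\<close> i j by fastforce
          qed simp
        qed
        have Eu': "E (u' i) (u' j) \<longleftrightarrow> (if i = 1 then even j else if j = 1 then odd i else R so se (i-1) (j-1))"
          if i: "i \<in> {1..n+1}" and j: "j \<in> {1..n+1}" and ij: "i \<noteq> j" for i j
        proof (cases "i = 1")
          case True
          then have "j - 1 \<in> {1..n}" "j \<noteq> 1" using j ij by auto
          then show ?thesis using True Evw[of "j-1"] by (auto simp: u'_def)
        next
          case False
          then have i': "i - 1 \<in> {1..n}" using i by auto
          show ?thesis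
          proof (cases "j = 1")
            case True
            then show ?thesis using False Ewv[OF i'] i by (auto simp: u'_def)
          next
            case c2: False
            then have j': "j - 1 \<in> {1..n}" using j by auto
            have "i - 1 \<noteq> j - 1" using False c2 ij i j by auto
            then show ?thesis using False c2 ER[OF i' j'] by (simp add: u'_def)
          qed
        qed
        have "weave (insert v V) E (n+1) u'"
        proof (rule weave_intro[OF T u'inj u'img])
          show "\<forall>i\<in>{1..n+1}. \<forall>j\<in>{1..n+1}. i < j \<and> odd (i+j) \<longrightarrow> E (u' i) (u' j)"
          proof (intro ballI impI)
            fix i j assume i: "i \<in> {1..n+1}" and j: "j \<in> {1..n+1}" and c: "i < j \<and> odd (i+j)"
            show "E (u' i) (u' j)"
            proof (cases "i = 1")
              case True then show ?thesis using Eu'[OF i j] c by auto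
            next
              case False
              then have "odd ((i-1) + (j-1))" "i - 1 < j - 1" using c i by auto
              then have "R so se (i-1) (j-1)" by (simp add: R_def)
              then show ?thesis using Eu'[OF i j] c False i j by auto
            qed
          qed
          show "ori E (n+1) u' odd False" unfolding ori_def
          proof (intro ballI impI)
            fix i j assume i: "i \<in> {1..n+1}" and j: "j \<in> {1..n+1}" and c: "i < j \<and> odd i \<and> odd j"
            show "if False then E (u' i) (u' j) else E (u' j) (u' i)"
            proof (cases "i = 1")
              case True then show ?thesis using Eu'[OF j i] c by auto
            next
              case False
              then have "\<not> odd ((j-1)+(i-1))" "\<not> odd (j-1)" "\<not> (j - 1 < i - 1)" using c i by auto
              then have "R so se (j-1) (i-1)" using sef unfolding R_def by presburger
              then show ?thesis using Eu'[OF j i] c False i j by auto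
            qed
          qed
          show "ori E (n+1) u' even True" unfolding ori_def
          proof (intro ballI impI)
            fix i j assume i: "i \<in> {1..n+1}" and j: "j \<in> {1..n+1}" and c: "i < j \<and> even i \<and> even j"
            then have "i \<noteq> 1" by auto
            then have "\<not> odd ((i-1)+(j-1))" "odd (i-1)" "i - 1 < j - 1" using c i by auto
            then have "R so se (i-1) (j-1)" using st unfolding R_def by presburger
            then show "if True then E (u' i) (u' j) else E (u' j) (u' i)" using Eu'[OF i j] c i j \<open>i \<noteq> 1\<close> by auto
          qed
        qed
        from main_i[OF this _ P] cI n2 show ?thesis by auto
      next
        case set: True
        have "tourn_iso (insert v V) E {1..n+1} (W_edge (n+1))"
        proof (rule iso_from_index[OF uinj uimg bij_betw_id])
          fix i j assume i: "i \<in> {1..n+1}" and j: "j \<in> {1..n+1}"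
          show "E (u i) (u j) \<longleftrightarrow> W_edge (n+1) (id i) (id j)"
          proof (cases "i = j")
            case True
            have "u i \<in> insert v V" using uimg i by auto
            then show ?thesis using True Eirr by (auto simp: W_edge_def)
          next
            case False
            show ?thesis
            proof (cases "j = n+1")
              case True then show ?thesis using Eu[OF i j False] i False by (auto simp: W_edge_def)
            next
              case c2: False
              show ?thesis
              proof (cases "i = n+1")
                case True then show ?thesis using Eu[OF i j False] j c2 by (auto simp: W_edge_def)
              next
                case c3: False
                have "R so se i j \<longleftrightarrow> i < j" using st set R_TT[OF False] by simp
                then show ?thesis using Eu[OF i j False] i j c2 c3 by (auto simp: W_edge_def)
              qed
            qed
          qed
        qed
        moreover have "odd (n+1)" using ev by simp
        ultimately show ?thesis by blast
      qed
    qed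
  qed
qed

theorem corollary3p3:
  fixes V :: "'a set" and E :: "'a \<Rightarrow> 'a \<Rightarrow> bool" and n :: nat and w :: "nat \<Rightarrow> 'a"
  assumes W: "weave V E n w"
  shows "(card V \<ge> 3 \<and> prime_tournament V E \<longrightarrow>
            (\<exists>m. odd m \<and> (tourn_iso V E {1..m} (T_edge m) \<or> tourn_iso V E {1..m} (U_edge m))))
       \<and> (\<forall>v. card V \<ge> 2 \<and> v \<notin> V
              \<and> (\<forall>i\<in>{1..n}. odd i \<longrightarrow> E v (w i))
              \<and> (\<forall>i\<in>{1..n}. even i \<longrightarrow> E (w i) v)
              \<and> prime_tournament (insert v V) E \<longrightarrow>
            (\<exists>m. odd m \<and> (tourn_iso (insert v V) E {1..m} (T_edge m)
                          \<or> tourn_iso (insert v V) E {1..m} (U_edge m)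
                          \<or> tourn_iso (insert v V) E {1..m} (W_edge m))))"
proof (intro conjI impI allI)
  assume h: "card V \<ge> 3 \<and> prime_tournament V E"
  show "\<exists>m. odd m \<and> (tourn_iso V E {1..m} (T_edge m) \<or> tourn_iso V E {1..m} (U_edge m))"
    by (rule main_i[OF W]) (use h in auto)
next
  fix v
  assume h: "card V \<ge> 2 \<and> v \<notin> V
              \<and> (\<forall>i\<in>{1..n}. odd i \<longrightarrow> E v (w i))
              \<and> (\<forall>i\<in>{1..n}. even i \<longrightarrow> E (w i) v)
              \<and> prime_tournament (insert v V) E"
  show "\<exists>m. odd m \<and> (tourn_iso (insert v V) E {1..m} (T_edge m)
                          \<or> tourn_iso (insert v V) E {1..m} (U_edge m)
                          \<or> tourn_iso (insert v V) E {1..m} (W_edge m))"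
    by (rule main_ii[OF W]) (use h in auto)
qed

end
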